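(* Let $\mu>0$, $c>0$, $m>0$, $\tilde\delta\in(0,1/2)$, $C\ge0$, $g\ge0$, and real numbers $F_k\ge F^\star\ge0$, with $\frac{g^2}{4c^2}+\frac{4\tilde\delta\mu F_k}{3m}>0$. Define $\lambda>0$ by $$2\lambda=\max\Big(\sqrt{\frac{4Cg^3}{\frac{1}{4c^2}g^2+\frac{4\tilde\delta\mu F_k}{3m}}}-\mu,\ \mu\Big),$$ and set $r=\frac{g}{2\lambda+\mu}$ and $\tilde\epsilon=\tilde\delta\frac{\mu}{2\lambda+\mu}$. Then $$4Cr^3-\frac{\lambda}{c^2}r^2\le\frac{2\lambda}{2\lambda+\mu}\cdot\frac{4\tilde\epsilon}{m}(F_k-F^\star)+4\tilde\epsilon\Big(1+\frac1m\Big)F^\star.$$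
   Context: In the paper's application, $g=\|\nabla F(x_k)\|_2$, $F_k=F(x_k)$, $F^\star=\min F$, $C$ bounds the cubic Taylor remainder, and $\lambda=\lambda_{k+1}$, $r=r_{k+1}$, $\tilde\epsilon=\tilde\epsilon_{k+1}$; the claim is a purely real-number inequality. *)

theory Defs
  imports Complex_Main
begin

end

theory Submission
  imports Defs
begin

theorem mainTheorem11:
  fixes mu c m delta C g Fk Fstar lam r eps :: real
  assumes "mu > 0" and "c > 0" and "m > 0"
    and "0 < delta" and "delta < 1/2"
    and "C \<ge> 0" and "g \<ge> 0"
    and "Fk \<ge> Fstar" and "Fstar \<ge> 0"
    and "g^2 / (4 * c^2) + 4 * delta * mu * Fk / (3 * m) > 0"
    and "2 * lam = max (sqrt (4 * C * g^3 / (g^2 / (4 * c^2) + 4 * delta * mu * Fk / (3 * m))) - mu) mu"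
    and "r = g / (2 * lam + mu)"
    and "eps = delta * mu / (2 * lam + mu)"
  shows "4 * C * r^3 - lam / c^2 * r^2
    \<le> 2 * lam / (2 * lam + mu) * (4 * eps / m) * (Fk - Fstar)
       + 4 * eps * (1 + 1 / m) * Fstar"
proof -
  define D where "D = g^2 / (4 * c^2) + 4 * delta * mu * Fk / (3 * m)"
  define L where "L = 2 * lam + mu"
  have Dp: "D > 0" using assms(10) D_def by simp
  have lm: "2 * lam \<ge> mu" using assms(11) by simp
  have Lp: "L > 0" using lm assms(1) L_def by simp
  have sq: "sqrt (4 * C * g^3 / D) \<le> L" using assms(11) L_def D_def by simp
  have X0: "4 * C * g^3 / D \<ge> 0" using Dp assms(6,7) by simp
  have "4 * C * g^3 / D \<le> L^2"
    using sq X0 by (metis Lp less_imp_le real_le_rsqrt real_sqrt_le_iff sqrt_le_D)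
  hence h: "4 * C * g^3 \<le> L^2 * D" using Dp by (simp add: divide_le_eq mult.commute)
  have lhs: "4 * C * r^3 - lam / c^2 * r^2 = (4 * C * g^3 - lam * L * g^2 / c^2) / L^3"
  proof -
    have r: "r = g / L" using assms(12) L_def by simp
    show ?thesis unfolding r using Lp assms(2) by (simp add: field_simps power2_eq_square power3_eq_cube)
  qed
  have rhs: "2 * lam / (2 * lam + mu) * (4 * eps / m) * (Fk - Fstar)
       + 4 * eps * (1 + 1 / m) * Fstar
     = (8 * lam * delta * mu * (Fk - Fstar) / m + 4 * delta * mu * L * (1 + 1/m) * Fstar) / L^2"
  proof -
    have e: "eps = delta * mu / L" using assms(13) L_def by simp
    have l: "2 * lam + mu = L" using L_def by simp
    show ?thesis unfolding e l using Lp assms(3) by (simp add: field_simps power2_eq_square)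
  qed
  have a1: "L^2 * g^2 / (4 * c^2) - lam * L * g^2 / c^2 \<le> 0"
  proof -
    have "L^2 * g^2 / (4 * c^2) - lam * L * g^2 / c^2 = L * (L - 4 * lam) * g^2 / (4 * c^2)"
      using assms(2) by (simp add: field_simps power2_eq_square)
    moreover have "L * (L - 4 * lam) * g^2 \<le> 0"
      using Lp lm L_def by (simp add: mult_nonneg_nonpos mult_nonpos_nonneg)
    ultimately show ?thesis using assms(2) by (simp add: divide_nonpos_pos)
  qed
  have fk0: "Fk \<ge> 0" using assms(8,9) by simp
  have a2: "L * Fk / 3 \<le> 2 * lam * (Fk - Fstar) + L * (m + 1) * Fstar"
  proof -
    have "L * Fk \<le> (6 * lam) * Fk" using L_def lm fk0 assms(1)
      by (intro mult_right_mono) simp_all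
    hence "L * Fk / 3 \<le> 2 * lam * Fk" by simp
    moreover have "(L * (m + 1) - 2 * lam) * Fstar \<ge> 0"
    proof -
      have "L * m \<ge> 0" using Lp assms(3) by simp
      hence "L * (m + 1) - 2 * lam \<ge> 0" using L_def assms(1) by (simp add: algebra_simps)
      thus ?thesis using assms(9) by simp
    qed
    ultimately show ?thesis by (simp add: algebra_simps)
  qed
  have a3: "L^2 * (4 * delta * mu * Fk / (3 * m)) \<le> L * (8 * lam * delta * mu * (Fk - Fstar) / m + 4 * delta * mu * L * (1 + 1/m) * Fstar)"
  proof -
    have k: "4 * delta * mu * L / m > 0" using assms(1,3,4) Lp by simp
    have "L^2 * (4 * delta * mu * Fk / (3 * m)) = (4 * delta * mu * L / m) * (L * Fk / 3)"
      using assms(3) by (simp add: field_simps power2_eq_square)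
    also have "\<dots> \<le> (4 * delta * mu * L / m) * (2 * lam * (Fk - Fstar) + L * (m + 1) * Fstar)"
      using k a2 by (intro mult_left_mono) simp_all
    also have "\<dots> = L * (8 * lam * delta * mu * (Fk - Fstar) / m + 4 * delta * mu * L * (1 + 1/m) * Fstar)"
      using assms(3) by (simp add: field_simps)
    finally show ?thesis .
  qed
  have num: "4 * C * g^3 - lam * L * g^2 / c^2 \<le> L * (8 * lam * delta * mu * (Fk - Fstar) / m + 4 * delta * mu * L * (1 + 1/m) * Fstar)"
    using h a1 a3 unfolding D_def by (simp add: algebra_simps)
  have "(4 * C * g^3 - lam * L * g^2 / c^2) / L^3 \<le> (8 * lam * delta * mu * (Fk - Fstar) / m + 4 * delta * mu * L * (1 + 1/m) * Fstar) / L^2"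
  proof -
    have "(4 * C * g^3 - lam * L * g^2 / c^2) / L^3 \<le> (L * (8 * lam * delta * mu * (Fk - Fstar) / m + 4 * delta * mu * L * (1 + 1/m) * Fstar)) / L^3"
      using num Lp by (simp add: divide_right_mono)
    also have "\<dots> = (8 * lam * delta * mu * (Fk - Fstar) / m + 4 * delta * mu * L * (1 + 1/m) * Fstar) / L^2"
      using Lp by (simp add: power3_eq_cube power2_eq_square)
    finally show ?thesis .
  qed
  thus ?thesis using lhs rhs by simp
qed

end
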